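(* Let $X$ be a nonnegative integer-valued random variable whose PGF $X(z)$ has radius of convergence $r>1$, mean $\mu=X'(1)>0$ and variance $\sigma^2=X''(1)-X'(1)^2+X'(1)>0$, such that $|X(z)|<X(r_1)$ whenever $|z|=r_1$, $z\ne r_1$, $r_1\in(0,r)$. For positive integers $n,s$ let $A(z)=X(z)^n$, $\mu_A=n\mu<s$, with degree of $X(z)$ larger than $s/n$. Suppose $\frac{n\mu}{s}=1-\frac{\gamma}{\sqrt s}$ with $\gamma$ bounded away from $0$ and $\infty$ as $s\to\infty$, let $a_0=\sqrt{2\mu}/\sigma$, $b_0=\frac{\gamma\sqrt\mu}{\sigma\sqrt2}$, and for integers $k$ with $k=o(s)$ let $Z_k$ denote the zero of $z^s-A(z)$ in $1<|z|<r$ satisfying $Z_k=1+\frac{a_0}{\sqrt s}\big(b_0+\sqrt{b_0^2-2\pi i k}\big)+O\big(\frac{1+|k|}{s}\big)$ (principal square root). Then, when $k=o(s)$, $$-\frac{s-\mu_A}{sZ_k^{s-1}-A'(Z_k)}=\frac{b_0}{\sqrt{b_0^2-2\pi i k}}\,\frac{1}{Z_k^{s-1}}\Big(1+O\Big(\frac{1+|k|}{\sqrt s}\Big)\Big),\qquad s\to\infty.$$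
   Context: $O$-terms refer to $s\to\infty$ with constants independent of $s$ and $k$. *)

theory Defs
  imports "HOL-Probability.Probability_Mass_Function" "HOL-Library.Landau_Symbols"
begin

definition pgf :: "nat pmf \<Rightarrow> complex \<Rightarrow> complex" where
  "pgf P z = (\<Sum>j. complex_of_real (pmf P j) * z ^ j)"

definition pgf_radius :: "nat pmf \<Rightarrow> ereal" where
  "pgf_radius P = conv_radius (\<lambda>j. complex_of_real (pmf P j))"

text \<open>mu = X'(1), sigma^2 = X''(1) - X'(1)^2 + X'(1) (real parts; they are real).\<close>
definition pgf_mean :: "nat pmf \<Rightarrow> real" where
  "pgf_mean P = Re (deriv (pgf P) 1)"

definition pgf_var :: "nat pmf \<Rightarrow> real" where
  "pgf_var P = Re (deriv (deriv (pgf P)) 1) - (pgf_mean P)\<^sup>2 + pgf_mean P"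

end

theory Submission imports Defs "HOL-Analysis.FPS_Convergence" "HOL-Complex_Analysis.Complex_Analysis"
begin

definition pgfF :: "nat pmf \<Rightarrow> complex fps" where
  "pgfF P = Abs_fps (\<lambda>j. complex_of_real (pmf P j))"

lemma pgf_eval: "pgf P = eval_fps (pgfF P)"
  by (auto simp: pgf_def eval_fps_def pgfF_def fun_eq_iff)

lemma pgf_radius_F: "pgf_radius P = fps_conv_radius (pgfF P)"
  by (simp add: pgf_radius_def fps_conv_radius_def pgfF_def)

lemma eval_fps_real1:
  fixes G :: "complex fps"
  assumes "\<And>n. Im (fps_nth G n) = 0" and "1 < fps_conv_radius G"
  shows "Im (eval_fps G 1) = 0"
proof -
  have "summable (\<lambda>n. fps_nth G n * 1 ^ n)"
    using assms(2) unfolding fps_conv_radius_def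
    by (intro summable_in_conv_radius) (simp add: one_ereal_def)
  hence "(\<lambda>n. fps_nth G n) sums eval_fps G 1" by (simp add: eval_fps_def summable_sums)
  hence "(\<lambda>n. Im (fps_nth G n)) sums Im (eval_fps G 1)" by (rule sums_Im)
  hence "(\<lambda>n. 0) sums Im (eval_fps G 1)" using assms(1) by simp
  thus ?thesis using sums_unique sums_zero by fastforce
qed

lemma pgf_one: "pgf P 1 = 1"
proof -
  have "pmf P sums infsetsum (pmf P) UNIV" by (rule sums_infsetsum_nat'[OF pmf_abs_summable])
  hence "pmf P sums 1" using infsetsum_pmf_eq_1[of P UNIV] by simp
  hence "(\<lambda>j. complex_of_real (pmf P j)) sums 1" using sums_of_real by fastforce
  thus ?thesis by (simp add: pgf_def sums_iff)
qed

lemma fps_deriv_real: "(\<And>n. Im (fps_nth G n) = 0) \<Longrightarrow> Im (fps_nth (fps_deriv G) n) = 0"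
  by (simp add: fps_deriv_nth)

lemma pgf_analytic:
  fixes P :: "nat pmf"
  assumes rad: "pgf_radius P > 1"
  obtains f1 :: "complex \<Rightarrow> complex" and \<delta> C :: real where
   "\<And>z. ereal (cmod z) < pgf_radius P \<Longrightarrow> (pgf P has_field_derivative f1 z) (at z)"
   "f1 1 = of_real (pgf_mean P)" "\<delta> > 0"
   "\<And>w. cmod w \<le> \<delta> \<Longrightarrow> ereal (cmod (1+w)) < pgf_radius P \<and> pgf P (1+w) \<noteq> 0 \<and>
       cmod ((1+w) * f1 (1+w) / pgf P (1+w) - of_real (pgf_mean P) - of_real (pgf_var P) * w) \<le> C * cmod w ^ 2"
proof -
  define F where "F = pgfF P"
  define F1 where "F1 = fps_deriv F"
  define F2 where "F2 = fps_deriv F1"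
  define r0 where "r0 = fps_conv_radius F"
  define f where "f = eval_fps F"
  define f1 where "f1 = eval_fps F1"
  define f2 where "f2 = eval_fps F2"
  have r0: "r0 > 1" using rad by (simp add: r0_def F_def pgf_radius_F)
  have r1: "fps_conv_radius F1 \<ge> r0" unfolding F1_def r0_def by (rule fps_conv_radius_deriv)
  have r2: "fps_conv_radius F2 \<ge> r0" using r1 fps_conv_radius_deriv[of F1] unfolding F2_def by auto
  have fpgf: "pgf P = f" by (simp add: f_def F_def pgf_eval)
  have d1: "(f has_field_derivative f1 z) (at z)" if "ereal (cmod z) < r0" for z
    unfolding f_def f1_def F1_def using that r0_def by (intro has_field_derivative_eval_fps) auto
  have d2: "(f1 has_field_derivative f2 z) (at z)" if "ereal (cmod z) < r0" for z
    unfolding f2_def f1_def F2_def using that r1 by (intro has_field_derivative_eval_fps) auto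
  have realF: "Im (fps_nth F n) = 0" for n by (simp add: F_def pgfF_def)
  have realF1: "Im (fps_nth F1 n) = 0" for n unfolding F1_def by (rule fps_deriv_real[OF realF])
  have realF2: "Im (fps_nth F2 n) = 0" for n unfolding F2_def by (rule fps_deriv_real[OF realF1])
  have im1: "Im (f1 1) = 0" unfolding f1_def by (rule eval_fps_real1[OF realF1]) (use r0 r1 in auto)
  have im2: "Im (f2 1) = 0" unfolding f2_def by (rule eval_fps_real1[OF realF2]) (use r0 r2 in auto)
  have one_in: "ereal (cmod (1::complex)) < r0" using r0 by (simp add: one_ereal_def)
  have derivf: "deriv f z = f1 z" if "ereal (cmod z) < r0" for z using d1[OF that] by (rule DERIV_imp_deriv)
  have op: "open (eball (0::complex) r0)" by (rule open_eball)
  have ev: "eventually (\<lambda>z. deriv f z = f1 z) (nhds 1)"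
  proof -
    have "eventually (\<lambda>z. z \<in> eball (0::complex) r0) (nhds 1)"
      using one_in by (intro eventually_nhds_in_open op) (simp add: eball_def)
    thus ?thesis by eventually_elim (rule derivf, simp add: eball_def)
  qed
  have dd: "deriv (deriv f) 1 = f2 1"
    using deriv_cong_ev[OF ev refl] DERIV_imp_deriv[OF d2[OF one_in]] by simp
  define mu where "mu = pgf_mean P"
  define v where "v = pgf_var P"
  have f11: "f1 1 = of_real mu"
    using im1 derivf[OF one_in] by (simp add: mu_def pgf_mean_def fpgf complex_eq_iff)
  have f21: "f2 1 = of_real (v - mu + mu^2)"
    using im2 dd by (simp add: v_def mu_def pgf_var_def fpgf complex_eq_iff)
  have f0: "f 1 = 1" using pgf_one[of P] fpgf by simp
  obtain e where e: "e > 0" "ball 1 e \<subseteq> eball (0::complex) r0"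
    using op one_in openE[OF op, of 1] by (auto simp: eball_def)
  have ic: "isCont f 1" using d1[OF one_in] by (rule DERIV_isCont)
  obtain d where d: "d > 0" "\<And>z. dist z 1 < d \<Longrightarrow> dist (f z) (f 1) < 1/2"
    using ic[unfolded continuous_at_eps_delta, rule_format, of "1/2"] by auto
  define \<delta>0 where "\<delta>0 = min e d"
  define S where "S = ball (1::complex) \<delta>0"
  have Sin: "z \<in> S \<Longrightarrow> ereal (cmod z) < r0 \<and> f z \<noteq> 0" for z
  proof -
    assume z: "z \<in> S"
    hence "z \<in> eball 0 r0" using e by (auto simp: S_def \<delta>0_def)
    moreover have "dist (f z) 1 < 1/2" using d(2)[of z] z f0 by (auto simp: S_def \<delta>0_def dist_commute)
    hence "f z \<noteq> 0" by auto
    ultimately show ?thesis by (auto simp: eball_def)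
  qed
  have opS: "open S" by (simp add: S_def)
  define G where "G = (\<lambda>z. z * f1 z / f z)"
  have Gh: "G holomorphic_on S"
    unfolding holomorphic_on_def G_def
  proof
    fix z assume z: "z \<in> S"
    from Sin[OF z] have "((\<lambda>z. z * f1 z / f z) has_field_derivative ((1 * f1 z + f2 z * z) * f z - z * f1 z * f1 z) / (f z * f z)) (at z)"
      by (intro DERIV_divide DERIV_mult DERIV_ident d1 d2) auto
    thus "(\<lambda>z. z * f1 z / f z) field_differentiable at z within S"
      using field_differentiable_at_within field_differentiable_def by blast
  qed
  have GD1: "(G has_field_derivative of_real (pgf_var P)) (at 1)"
  proof -
    have "((\<lambda>z. z * f1 z / f z) has_field_derivative ((1 * f1 1 + f2 1 * 1) * f 1 - 1 * f1 1 * f1 1) / (f 1 * f 1)) (at 1)"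
      using f0 by (intro DERIV_divide DERIV_mult DERIV_ident d1 d2 one_in) auto
    moreover have "((1 * f1 1 + f2 1 * 1) * f 1 - 1 * f1 1 * f1 1) / (f 1 * f 1) = of_real (pgf_var P)"
      using f0 f11 f21 by (simp add: v_def power2_eq_square)
    ultimately show ?thesis by (simp add: G_def)
  qed
  have G1: "G 1 = of_real mu" using f0 f11 by (simp add: G_def)
  define \<delta> where "\<delta> = \<delta>0 / 2"
  have \<delta>: "\<delta> > 0" using e d by (simp add: \<delta>_def \<delta>0_def)
  have cb: "cball 1 \<delta> \<subseteq> S" using \<delta> by (auto simp: S_def \<delta>_def)
  have G2h: "deriv (deriv G) holomorphic_on S" using Gh opS by (intro holomorphic_deriv) 
  have "compact (deriv (deriv G) ` cball 1 \<delta>)"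
    by (intro compact_continuous_image holomorphic_on_imp_continuous_on holomorphic_on_subset[OF G2h cb]) auto
  then obtain B where B: "\<And>x. x \<in> cball 1 \<delta> \<Longrightarrow> cmod (deriv (deriv G) x) \<le> B"
    using compact_imp_bounded bounded_iff by (metis image_eqI)
  define ff where "ff = (\<lambda>i::nat. if i = 0 then G else if i = 1 then deriv G else deriv (deriv G))"
  have tay: "cmod (G z - (G 1 + deriv G 1 * (z - 1))) \<le> B * cmod (z - 1) ^ 2" if z: "z \<in> cball 1 \<delta>" for z
  proof -
    have "cmod (ff 0 z - (\<Sum>i\<le>1. ff i 1 * (z - 1) ^ i / fact i)) \<le> B * cmod (z - 1) ^ Suc 1 / fact 1"
    proof (rule complex_Taylor[of "cball 1 \<delta>"])
      fix i :: nat and x :: complex assume x: "x \<in> cball 1 \<delta>" and i: "i \<le> 1"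
      have xS: "x \<in> S" using x cb by auto
      have Gdh: "deriv G holomorphic_on S" using Gh opS by (intro holomorphic_deriv)
      show "(ff i has_field_derivative ff (Suc i) x) (at x within cball 1 \<delta>)"
      proof (cases "i = 0")
        case True thus ?thesis using holomorphic_derivI[OF Gh opS xS] by (simp add: ff_def)
      next
        case False hence "i = 1" using i by auto
        thus ?thesis using holomorphic_derivI[OF Gdh opS xS] by (simp add: ff_def)
      qed
    next
      fix x :: complex assume "x \<in> cball 1 \<delta>" thus "cmod (ff (Suc 1) x) \<le> B" using B by (simp add: ff_def)
    qed (use z \<delta> in auto)
    thus ?thesis by (simp add: ff_def power2_eq_square)
  qed
  have dG: "deriv G 1 = of_real (pgf_var P)" using GD1 by (rule DERIV_imp_deriv)
  show ?thesis
  proof (rule that[of f1 \<delta> B])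
    show "\<And>z. ereal (cmod z) < pgf_radius P \<Longrightarrow> (pgf P has_field_derivative f1 z) (at z)"
      using d1 by (simp add: fpgf r0_def F_def pgf_radius_F)
    show "f1 1 = of_real (pgf_mean P)" using f11 mu_def by simp
    show "\<delta> > 0" by fact
    fix w :: complex assume w: "cmod w \<le> \<delta>"
    hence wS: "1 + w \<in> S" using cb by (auto simp: dist_norm)
    have "cmod (G (1+w) - (G 1 + deriv G 1 * (1 + w - 1))) \<le> B * cmod (1 + w - 1) ^ 2"
      using w by (intro tay) (auto simp: dist_norm)
    thus "ereal (cmod (1+w)) < pgf_radius P \<and> pgf P (1+w) \<noteq> 0 \<and>
       cmod ((1+w) * f1 (1+w) / pgf P (1+w) - of_real (pgf_mean P) - of_real (pgf_var P) * w) \<le> B * cmod w ^ 2"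
      using Sin[OF wS] G1 dG by (simp add: fpgf G_def r0_def F_def pgf_radius_F mu_def algebra_simps)
  qed
qed


lemma key_alg_q:
  fixes q nn mu sig2 a0 b0 kap :: real and R w G :: complex
  assumes "q > 0" "mu > 0" "a0 * sig2/mu = kap"
  shows "of_real ((q^2 - kap * b0 * q)/mu) * G - of_real (q^2) = of_real (kap * q) * R
     + (of_real(q^2 * sig2/mu) * (w - of_real(a0/q) * (of_real b0 + R))
        - of_real(kap * b0 * q * sig2/mu) * w
        + of_real((q^2 - kap * b0 * q)/mu) * (G - of_real mu - of_real sig2 * w))"
proof -
  have k: "kap = a0 * sig2/mu" using assms(3) by simp
  show ?thesis using assms unfolding k
    by (simp add: field_simps power2_eq_square)
qed

lemma le_sqrt_self: "0 \<le> (x::real) \<Longrightarrow> x \<le> 1 \<Longrightarrow> x \<le> sqrt x"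
  by (rule real_le_rsqrt) (metis mult_left_le power2_eq_square)

lemma sqrt_le_self1: "1 \<le> (u::real) \<Longrightarrow> sqrt u \<le> u"
proof -
  assume u: "1 \<le> u"
  hence "u \<le> u * u" by (simp add: mult_le_cancel_left1)
  hence "sqrt u \<le> sqrt (u * u)" by (rule real_sqrt_le_mono)
  thus ?thesis using u by simp
qed

lemma L1:
  fixes s u a0 b B0 M nR ne nw C1 :: real
  assumes "s > 0" "u \<ge> 1" "u / s \<le> 1" "M \<ge> 0" "nR \<le> sqrt (M * u)" "0 \<le> b" "b \<le> B0" "a0 \<ge> 0"
    "ne \<le> C1 * u/s" "C1 \<ge> 0" "nw \<le> a0/sqrt s * (b + nR) + ne"
  shows "nw \<le> (a0 * (B0 + sqrt M) + C1) * sqrt (u/s)"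
proof -
  have su: "sqrt u \<ge> 1" using assms(2) by simp
  have "b + nR \<le> B0 + sqrt M * sqrt u" using assms(5,7) by (simp add: real_sqrt_mult)
  also have "\<dots> \<le> (B0 + sqrt M) * sqrt u"
  proof -
    have "B0 \<le> B0 * sqrt u" using su assms(6,7) by (simp add: mult_le_cancel_left1)
    thus ?thesis by (simp add: distrib_right)
  qed
  finally have h1: "b + nR \<le> (B0 + sqrt M) * sqrt u" .
  have "a0/sqrt s * (b + nR) \<le> a0/sqrt s * ((B0 + sqrt M) * sqrt u)"
    using h1 assms(1,8) by (intro mult_left_mono) auto
  also have "\<dots> = a0 * (B0 + sqrt M) * sqrt (u/s)" by (simp add: real_sqrt_divide)
  finally have h2: "a0/sqrt s * (b + nR) \<le> a0 * (B0 + sqrt M) * sqrt (u/s)" .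
  have "u/s \<ge> 0" using assms(1,2) by simp
  hence "u/s \<le> sqrt (u/s)" using assms(3) by (rule le_sqrt_self)
  hence "C1 * (u/s) \<le> C1 * sqrt (u/s)" using assms(10) by (rule mult_left_mono)
  hence "ne \<le> C1 * sqrt (u/s)" using assms(9) by simp
  thus ?thesis using h2 assms(11) by (simp add: algebra_simps)
qed


lemma L2:
  fixes s u nT ne nw nr A1 A2 A3 C1 W1 Cr :: real
  assumes "s > 0" "u \<ge> 1" "A1 \<ge> 0" "A2 \<ge> 0" "A3 \<ge> 0" "Cr \<ge> 0" "W1 \<ge> 0" "C1 \<ge> 0"
    "nT \<le> A1 * s * ne + A2 * sqrt s * nw + A3 * s * nr" "ne \<le> C1 * u/s" "nw \<le> W1 * sqrt(u/s)" "0 \<le> nw"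
    "nr \<le> Cr * nw^2"
  shows "nT \<le> (A1 * C1 + A2 * W1 + A3 * Cr * W1^2) * u"
proof -
  have e1: "s * ne \<le> C1 * u" using assms(1,10) by (simp add: field_simps)
  have "sqrt s * nw \<le> sqrt s * (W1 * sqrt(u/s))" using assms(1,11) by (intro mult_left_mono) auto
  also have "\<dots> = W1 * sqrt u" using assms(1) by (simp add: real_sqrt_divide)
  also have "\<dots> \<le> W1 * u" using assms(2,7) sqrt_le_self1 by (intro mult_left_mono) auto
  finally have e2: "sqrt s * nw \<le> W1 * u" .
  have "nw^2 \<le> (W1 * sqrt(u/s))^2" using assms(11,12) by (intro power_mono) auto
  also have "\<dots> = W1^2 * u/s" using assms(1,2) by (simp add: power_mult_distrib)
  finally have "nw^2 \<le> W1^2 * u/s" .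
  hence "s * nw^2 \<le> W1^2 * u" using assms(1) by (simp add: field_simps)
  hence x1: "Cr * (s * nw^2) \<le> Cr * (W1^2 * u)" using assms(6) by (rule mult_left_mono)
  have x2: "s * nr \<le> s * (Cr * nw^2)" using assms(1,13) by (intro mult_left_mono) auto
  have x3: "s * (Cr * nw^2) = Cr * (s * nw^2)" by simp
  have "s * nr \<le> Cr * W1^2 * u" using x1 x2 x3 by simp
  hence "A3 * (s * nr) \<le> A3 * (Cr * W1^2 * u)" using assms(5) by (rule mult_left_mono)
  moreover have "A1 * (s * ne) \<le> A1 * (C1 * u)" using e1 assms(3) by (rule mult_left_mono)
  moreover have "A2 * (sqrt s * nw) \<le> A2 * (W1 * u)" using e2 assms(4) by (rule mult_left_mono)
  ultimately show ?thesis using assms(9) by (simp add: algebra_simps)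
qed


lemma L3:
  fixes s u nT nR K1 kap m :: real
  assumes "s > 0" "u \<ge> 1" "kap > 0" "m > 0" "K1 \<ge> 0" "nT \<le> K1 * u" "sqrt (m * u) \<le> nR"
    "u/s \<le> kap^2 * m/(4 * K1^2+1)" "0 \<le> nT"
  shows "nT \<le> kap * sqrt s * nR/2" "2 * nT/(kap * sqrt s * nR) \<le> (2 * K1/(kap * sqrt m)) * (u/sqrt s)"
proof -
  have u0: "u > 0" using assms(2) by simp
  have "u \<le> kap^2 * m/(4 * K1^2+1) * s" using assms(1,8) by (simp add: field_simps)
  hence "K1^2 * u \<le> K1^2 * (kap^2 * m/(4 * K1^2+1) * s)" by (intro mult_left_mono) auto
  also have "\<dots> \<le> kap^2 * m * s/4"
  proof -
    have "K1^2/(4 * K1^2+1) \<le> 1/4"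
    proof -
      have p: "4 * K1^2+1 > 0" using zero_le_power2[of K1] by linarith
      thus ?thesis by (simp add: divide_le_eq)
    qed
    hence "K1^2/(4 * K1^2+1) * (kap^2 * m * s) \<le> 1/4 * (kap^2 * m * s)" using assms(1,4)
      by (intro mult_right_mono) auto
    thus ?thesis by (simp add: field_simps)
  qed
  finally have sq: "K1^2 * u \<le> kap^2 * m * s/4" .
  have "(K1 * u)^2 \<le> (kap * sqrt (s * m * u)/2)^2"
  proof -
    have e1: "(K1 * u)^2 = (K1^2 * u) * u" by (simp only: power_mult_distrib power2_eq_square ac_simps)
    have e2: "(K1^2 * u) * u \<le> (kap^2 * m * s/4) * u" using sq u0 by (rule mult_right_mono[OF _ less_imp_le])
    have sq2: "(sqrt (s * m * u))^2 = s * m * u" using assms(1,4) u0 by (intro real_sqrt_pow2) simp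
    have e3: "(kap * sqrt (s * m * u)/2)^2 = kap^2 * (s * m * u) / 4"
      by (simp only: power_mult_distrib power_divide sq2) simp
    show ?thesis unfolding e1 e3 using e2 by (simp add: ac_simps)
  qed
  moreover have nn: "0 \<le> kap * sqrt (s * m * u)/2"
    using assms(1,3,4) u0 by (intro divide_nonneg_pos mult_nonneg_nonneg real_sqrt_ge_zero) auto
  ultimately have a: "K1 * u \<le> kap * sqrt (s * m * u)/2"
    by (rule power2_le_imp_le)
  have b0: "sqrt (s * m * u) = sqrt s * sqrt (m * u)" by (simp only: real_sqrt_mult mult.assoc)
  have "sqrt s * sqrt (m * u) \<le> sqrt s * nR" using assms(1,7) by (intro mult_left_mono) simp_all
  hence b: "kap * sqrt (s * m * u) \<le> kap * sqrt s * nR"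
    unfolding b0 using assms(3) by (simp add: mult.assoc mult_left_mono)
  show "nT \<le> kap * sqrt s * nR/2" using a b assms(6) by linarith
  have pos: "kap * sqrt s * sqrt(m * u) > 0" using assms u0 by simp
  have "2 * nT/(kap * sqrt s * nR) \<le> 2 * nT/(kap * sqrt s * sqrt(m * u))"
  proof (rule divide_left_mono)
    show "kap * sqrt s * sqrt (m * u) \<le> kap * sqrt s * nR"
      using assms(7) assms(3) assms(1) by (intro mult_left_mono) auto
    show "0 \<le> 2 * nT" using assms(9) by simp
    have nRpos: "nR > 0" using pos assms(7) assms(1,3)
      by (metis mult_pos_pos not_le order_less_le_trans real_sqrt_gt_zero zero_less_mult_pos)
    show "0 < kap * sqrt s * nR * (kap * sqrt s * sqrt (m * u))"
      using pos nRpos assms(1,3,4) u0 by (intro mult_pos_pos) auto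
  qed
  also have "\<dots> \<le> 2 * (K1 * u)/(kap * sqrt s * sqrt(m * u))"
    using pos assms(6) by (intro divide_right_mono) auto
  also have "\<dots> = (2 * K1/(kap * sqrt m)) * (sqrt u/sqrt s)"
  proof -
    have su: "sqrt u * sqrt u = u" using u0 by simp
    have "2 * (K1 * u)/(kap * sqrt s * sqrt(m * u)) = (2 * K1 * sqrt u) * sqrt u/((kap * sqrt s * sqrt m) * sqrt u)"
      using u0 by (simp add: real_sqrt_mult su mult.assoc mult.left_commute)
    also have "\<dots> = (2 * K1 * sqrt u)/(kap * sqrt s * sqrt m)"
      using u0 by (intro mult_divide_mult_cancel_right) auto
    also have "\<dots> = (2 * K1/(kap * sqrt m)) * (sqrt u/sqrt s)" by simp
    finally show ?thesis .
  qed
  also have "\<dots> \<le> (2 * K1/(kap * sqrt m)) * (u/sqrt s)"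
    using assms u0 by (intro mult_left_mono divide_right_mono) (auto simp: sqrt_le_self1)
  finally show "2 * nT/(kap * sqrt s * nR) \<le> (2 * K1/(kap * sqrt m)) * (u/sqrt s)" .
qed




theorem lemma5p2:
  fixes P :: "nat pmf"
    and n :: "nat \<Rightarrow> nat"
    and gamma :: "nat \<Rightarrow> real"
    and k :: "nat \<Rightarrow> int"
    and Z :: "nat \<Rightarrow> complex"
  defines "mu \<equiv> pgf_mean P"
    and "sig \<equiv> sqrt (pgf_var P)"
  defines "a0 \<equiv> sqrt (2 * mu) / sig"
    and "b0 \<equiv> (\<lambda>s. gamma s * sqrt mu / (sig * sqrt 2))"
  assumes radius: "pgf_radius P > 1"
    and mean_pos: "mu > 0"
    and var_pos: "pgf_var P > 0"
    and aperiodic: "\<And>r1 z. 0 < r1 \<Longrightarrow> ereal r1 < pgf_radius P \<Longrightarrow> cmod z = r1 \<Longrightarrow>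
                      z \<noteq> complex_of_real r1 \<Longrightarrow> cmod (pgf P z) < cmod (pgf P (complex_of_real r1))"
    and n_pos: "\<forall>\<^sub>F s in sequentially. n s > 0"
    and muA_less: "\<forall>\<^sub>F s in sequentially. real (n s) * mu < real s"
    and degree: "\<forall>\<^sub>F s in sequentially. \<exists>j. real j > real s / real (n s) \<and> pmf P j \<noteq> 0"
    and gamma_def: "\<forall>\<^sub>F s in sequentially. real (n s) * mu / real s = 1 - gamma s / sqrt (real s)"
    and gamma_bounded: "\<exists>c C. 0 < c \<and> c \<le> C \<and> (\<forall>\<^sub>F s in sequentially. c \<le> gamma s \<and> gamma s \<le> C)"
    and k_small: "(\<lambda>s. real_of_int (k s)) \<in> o(\<lambda>s. real s)"
    and Z_zero: "\<forall>\<^sub>F s in sequentially. Z s ^ s = pgf P (Z s) ^ n s"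
    and Z_annulus: "\<forall>\<^sub>F s in sequentially. 1 < cmod (Z s) \<and> ereal (cmod (Z s)) < pgf_radius P"
    and Z_approx: "(\<lambda>s. cmod (Z s - (1 + complex_of_real (a0 / sqrt (real s)) *
                      (complex_of_real (b0 s) + csqrt (complex_of_real ((b0 s)\<^sup>2)
                         - 2 * complex_of_real pi * \<i> * of_int (k s))))))
                   \<in> O(\<lambda>s. (1 + \<bar>real_of_int (k s)\<bar>) / real s)"
  shows "\<exists>E :: nat \<Rightarrow> complex.
           (\<lambda>s. cmod (E s)) \<in> O(\<lambda>s. (1 + \<bar>real_of_int (k s)\<bar>) / sqrt (real s)) \<and>
           (\<forall>\<^sub>F s in sequentially.
              - (of_nat s - complex_of_real (real (n s) * mu))
                / (of_nat s * Z s ^ (s - 1) - deriv (\<lambda>z. pgf P z ^ n s) (Z s))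
              = complex_of_real (b0 s) / csqrt (complex_of_real ((b0 s)\<^sup>2)
                         - 2 * complex_of_real pi * \<i> * of_int (k s))
                * (1 / Z s ^ (s - 1)) * (1 + E s))"
  proof -
  obtain f1 :: "complex \<Rightarrow> complex" and \<delta> Cr0 :: real where
    f1d: "\<And>z. ereal (cmod z) < pgf_radius P \<Longrightarrow> (pgf P has_field_derivative f1 z) (at z)"
    and \<delta>: "\<delta> > 0"
    and tay: "\<And>w. cmod w \<le> \<delta> \<Longrightarrow> ereal (cmod (1+w)) < pgf_radius P \<and> pgf P (1+w) \<noteq> 0 \<and>
       cmod ((1+w) * f1 (1+w) / pgf P (1+w) - of_real (pgf_mean P) - of_real (pgf_var P) * w) \<le> Cr0 * cmod w ^ 2"
    using pgf_analytic[OF radius] by metis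
  define Cr where "Cr = max Cr0 0"
  define sig2 where "sig2 = pgf_var P"
  have sig2_pos: "sig2 > 0" using var_pos by (simp add: sig2_def)
  have sig_pos: "sig > 0" using var_pos by (simp add: sig_def)
  have sig_sq: "sig * sig = sig2" using var_pos by (simp add: sig_def sig2_def)
  define kap where "kap = sig * sqrt 2 / sqrt mu"
  have kap_pos: "kap > 0" using sig_pos mean_pos by (simp add: kap_def)
  have a0_nn: "a0 \<ge> 0" using sig_pos mean_pos by (simp add: a0_def)
  have kapa0: "a0 * sig2 / mu = kap"
  proof -
    have "sqrt (2 * mu) = sqrt 2 * sqrt mu" by (simp add: real_sqrt_mult)
    moreover have "sqrt mu * sqrt mu = mu" using mean_pos by simp
    ultimately show ?thesis using sig_pos mean_pos unfolding a0_def kap_def sig_sq[symmetric]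
      by (simp add: field_simps)
  qed
  have kapb0: "kap * b0 s = gamma s" for s
    using sig_pos mean_pos by (simp add: kap_def b0_def field_simps)
  obtain cg Cg where cg: "0 < cg" "cg \<le> Cg" and gev: "\<forall>\<^sub>F s in sequentially. cg \<le> gamma s \<and> gamma s \<le> Cg"
    using gamma_bounded by blast
  define beta0 where "beta0 = cg * sqrt mu / (sig * sqrt 2)"
  define B0 where "B0 = Cg * sqrt mu / (sig * sqrt 2)"
  have beta0_pos: "beta0 > 0" using cg sig_pos mean_pos by (simp add: beta0_def)
  have b0_bounds: "beta0 \<le> b0 s \<and> b0 s \<le> B0" if "cg \<le> gamma s" "gamma s \<le> Cg" for s
  proof -
    have p: "sqrt mu / (sig * sqrt 2) > 0" using sig_pos mean_pos by simp
    have "cg * (sqrt mu / (sig * sqrt 2)) \<le> gamma s * (sqrt mu / (sig * sqrt 2))"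
      using that p by (intro mult_right_mono) auto
    moreover have "gamma s * (sqrt mu / (sig * sqrt 2)) \<le> Cg * (sqrt mu / (sig * sqrt 2))"
      using that p by (intro mult_right_mono) auto
    ultimately show ?thesis by (simp add: beta0_def B0_def b0_def)
  qed
  have B0_nn: "B0 \<ge> 0" using cg sig_pos mean_pos by (simp add: B0_def)
  define m where "m = min (beta0^2) (2 * pi) / 2"
  define M where "M = max (B0^2) (2 * pi)"
  have m_pos: "m > 0" using beta0_pos pi_gt_zero by (simp add: m_def)
  have M_nn: "M \<ge> 0" unfolding M_def by (rule order_trans[OF zero_le_power2 max.cobounded1])
  define R where "R = (\<lambda>s. csqrt (complex_of_real ((b0 s)\<^sup>2) - 2 * complex_of_real pi * \<i> * of_int (k s)))"
  define eta where "eta = (\<lambda>s. Z s - (1 + complex_of_real (a0 / sqrt (real s)) * (complex_of_real (b0 s) + R s)))"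
  have Zap: "(\<lambda>s. cmod (eta s)) \<in> O(\<lambda>s. (1 + \<bar>real_of_int (k s)\<bar>) / real s)"
    using Z_approx unfolding eta_def R_def .
  obtain C1 where C1: "C1 > 0" and C1ev: "\<forall>\<^sub>F s in sequentially. norm (cmod (eta s)) \<le> C1 * norm ((1 + \<bar>real_of_int (k s)\<bar>) / real s)"
    using landau_o.bigE[OF Zap] by blast
  define W1 where "W1 = a0 * (B0 + sqrt M) + C1"
  have W1_pos: "W1 > 0" using C1 a0_nn B0_nn M_nn by (simp add: W1_def add_nonneg_pos)
  define A1 where "A1 = sig2 / mu"
  define A2 where "A2 = Cg * sig2 / mu"
  define A3 where "A3 = 1 / mu"
  define K1 where "K1 = A1 * C1 + A2 * W1 + A3 * Cr * W1^2"
  have Cr_nn: "Cr \<ge> 0" by (simp add: Cr_def)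
  have A_nn: "A1 \<ge> 0" "A2 \<ge> 0" "A3 \<ge> 0" using sig2_pos mean_pos cg by (simp_all add: A1_def A2_def A3_def)
  have K1_nn: "K1 \<ge> 0" using A_nn Cr_nn C1 W1_pos by (simp add: K1_def)
  define eps where "eps = min 1 (min ((\<delta> / W1)^2) (kap^2 * m / (4 * K1^2 + 1)))"
  have eps_pos: "eps > 0" using \<delta> W1_pos kap_pos m_pos by (simp add: eps_def add_nonneg_pos)
  have small: "\<forall>\<^sub>F s in sequentially. (1 + \<bar>real_of_int (k s)\<bar>) / real s \<le> eps"
  proof -
    have e1: "\<forall>\<^sub>F s in sequentially. norm (real_of_int (k s)) \<le> eps / 2 * norm (real s)"
      using landau_o.smallD[OF k_small, of "eps/2"] eps_pos by simp
    have e2: "\<forall>\<^sub>F s in sequentially. s \<ge> nat (ceiling (2 / eps)) + 1"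
      by (rule eventually_ge_at_top)
    show ?thesis using e1 e2
    proof eventually_elim
      case (elim s)
      have "real s \<ge> 2 / eps" using elim(2) by linarith
      hence s0: "real s > 0" "1 \<le> eps / 2 * real s" using eps_pos elim(2) by (auto simp: field_simps)
      have "1 + \<bar>real_of_int (k s)\<bar> \<le> eps * real s" using elim(1) s0 by simp
      thus ?case using s0 by (simp add: divide_le_eq)
    qed
  qed
  define G where "G = (\<lambda>z. z * f1 z / pgf P z)"
  define T where "T = (\<lambda>s. let q = sqrt (real s); w = Z s - 1 in
     (of_real(q^2 * sig2/mu) * (w - of_real(a0/q) * (of_real (b0 s) + R s))
        - of_real(kap * b0 s * q * sig2/mu) * w
        + of_real((q^2 - kap * b0 s * q)/mu) * (G (Z s) - of_real mu - of_real sig2 * w)))"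
  define E where "E = (\<lambda>s. - T s / (of_real (kap * sqrt (real s)) * R s + T s))"
  define K where "K = 2 * K1 / (kap * sqrt m)"
  have main: "\<forall>\<^sub>F s in sequentially.
      (- (of_nat s - complex_of_real (real (n s) * mu))
                / (of_nat s * Z s ^ (s - 1) - deriv (\<lambda>z. pgf P z ^ n s) (Z s))
              = complex_of_real (b0 s) / R s * (1 / Z s ^ (s - 1)) * (1 + E s))
      \<and> cmod (E s) \<le> K * ((1 + \<bar>real_of_int (k s)\<bar>) / sqrt (real s))"
    using n_pos muA_less gamma_def gev Z_zero Z_annulus C1ev small eventually_ge_at_top[of 1]
  proof eventually_elim
    case (elim s)
    note npos = elim(1) and gd = elim(3) and gb = elim(4) and Zz = elim(5) and Za = elim(6)
      and Ce = elim(7) and sm = elim(8) and s1 = elim(9)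
    define rs where "rs = real s"
    define q where "q = sqrt rs"
    define u where "u = 1 + \<bar>real_of_int (k s)\<bar>"
    define w where "w = Z s - 1"
    have rs_pos: "rs > 0" using s1 by (simp add: rs_def)
    have q_pos: "q > 0" using rs_pos by (simp add: q_def)
    have qq: "q^2 = rs" using rs_pos by (simp add: q_def)
    have u1: "u \<ge> 1" by (simp add: u_def)
    have us: "u / rs \<le> eps" using sm by (simp add: u_def rs_def)
    have us1: "u / rs \<le> 1" using us by (simp add: eps_def)
    have bb: "beta0 \<le> b0 s" "b0 s \<le> B0" using b0_bounds gb by auto
    have b0_pos: "b0 s > 0" using bb beta0_pos by linarith
    define z0 where "z0 = complex_of_real ((b0 s)\<^sup>2) - 2 * complex_of_real pi * \<i> * of_int (k s)"
    have Rz: "R s = csqrt z0" by (simp add: R_def z0_def)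
    have Re0: "Re z0 = (b0 s)^2" by (simp add: z0_def)
    have Im0: "\<bar>Im z0\<bar> = 2 * pi * \<bar>real_of_int (k s)\<bar>" by (simp add: z0_def abs_mult)
    have lo1: "(b0 s)^2 \<le> cmod z0" using abs_Re_le_cmod[of z0] Re0 by simp
    have lo2: "2 * pi * \<bar>real_of_int (k s)\<bar> \<le> cmod z0" using abs_Im_le_cmod[of z0] Im0 by simp
    have hi: "cmod z0 \<le> (b0 s)^2 + 2 * pi * \<bar>real_of_int (k s)\<bar>" using cmod_le[of z0] Re0 Im0 by simp
    have bsq: "beta0^2 \<le> (b0 s)^2" "(b0 s)^2 \<le> B0^2" using bb beta0_pos by (auto intro: power_mono)
    have mu_le: "m * u \<le> cmod z0"
    proof -
      have "min (beta0^2) (2 * pi) * u \<le> beta0^2 + 2 * pi * \<bar>real_of_int (k s)\<bar>"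
        unfolding u_def distrib_left mult_1_right
        by (intro add_mono min.cobounded1 mult_mono min.cobounded2) auto
      thus ?thesis using lo1 lo2 bsq by (simp add: m_def)
    qed
    have Mu_ge: "cmod z0 \<le> M * u"
    proof -
      have "(b0 s)^2 + 2 * pi * \<bar>real_of_int (k s)\<bar> \<le> M + M * \<bar>real_of_int (k s)\<bar>"
        using bsq by (intro add_mono mult_right_mono) (auto simp: M_def)
      thus ?thesis using hi by (simp add: u_def distrib_left)
    qed
    have nR: "cmod (R s) = sqrt (cmod z0)" by (simp add: Rz)
    have nR_lo: "sqrt (m * u) \<le> cmod (R s)" using mu_le by (simp add: nR)
    have nR_hi: "cmod (R s) \<le> sqrt (M * u)" using Mu_ge by (simp add: nR)
    have "sqrt (m * u) > 0" using m_pos u1 by simp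
    hence R_nz: "R s \<noteq> 0" using nR_lo by auto
    have ne: "cmod (eta s) \<le> C1 * u / rs" using Ce by (simp add: u_def rs_def)
    have weta: "w = of_real (a0 / q) * (of_real (b0 s) + R s) + eta s"
      by (simp add: w_def eta_def q_def rs_def)
    have nw0: "cmod w \<le> a0 / sqrt rs * (b0 s + cmod (R s)) + cmod (eta s)"
    proof -
      have "cmod w \<le> cmod (of_real (a0 / q) * (of_real (b0 s) + R s)) + cmod (eta s)"
        unfolding weta by (rule norm_triangle_ineq)
      also have "cmod (of_real (a0 / q) * (of_real (b0 s) + R s)) \<le> a0 / q * (b0 s + cmod (R s))"
      proof -
        have "cmod (of_real (b0 s) + R s) \<le> b0 s + cmod (R s)"
          using norm_triangle_ineq[of "of_real (b0 s)" "R s"] b0_pos by simp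
        moreover have "cmod (of_real (a0 / q) * (of_real (b0 s) + R s)) = a0 / q * cmod (of_real (b0 s) + R s)"
          using a0_nn q_pos by (simp only: norm_mult norm_of_real) simp
        moreover have "a0 / q \<ge> 0" using a0_nn q_pos by simp
        ultimately show ?thesis by (metis mult_left_mono)
      qed
      finally show ?thesis by (simp add: q_def)
    qed
    have nw: "cmod w \<le> W1 * sqrt (u / rs)"
      unfolding W1_def
      by (rule L1[OF rs_pos u1 us1 M_nn nR_hi _ bb(2) a0_nn ne _ nw0]) (use b0_pos C1 in auto)
    have w_small: "cmod w \<le> \<delta>"
    proof -
      have "sqrt (u / rs) \<le> sqrt ((\<delta> / W1)^2)" using us by (intro real_sqrt_le_mono) (simp add: eps_def)
      also have "\<dots> = \<delta> / W1" using \<delta> W1_pos by simp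
      finally have "W1 * sqrt (u / rs) \<le> W1 * (\<delta> / W1)" using W1_pos by (intro mult_left_mono) auto
      thus ?thesis using nw W1_pos by simp
    qed
    have Zw: "Z s = 1 + w" by (simp add: w_def)
    from tay[OF w_small] have fz_nz: "pgf P (Z s) \<noteq> 0"
      and rho0: "cmod (G (Z s) - of_real mu - of_real sig2 * w) \<le> Cr0 * cmod w ^ 2"
      by (simp_all add: Zw G_def mu_def sig2_def)
    have rho: "cmod (G (Z s) - of_real mu - of_real sig2 * w) \<le> Cr * cmod w ^ 2"
      using rho0 by (rule order_trans) (simp add: Cr_def mult_right_mono)
    have gam_q: "gamma s * q \<ge> 0" using gb cg q_pos by simp
    have nmu: "real (n s) * mu = rs - gamma s * q"
    proof -
      have "real (n s) * mu = rs * (1 - gamma s / q)" using gd rs_pos by (simp add: field_simps rs_def q_def)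
      also have "\<dots> = rs - gamma s * q" using q_pos qq by (simp add: field_simps power2_eq_square)
      finally show ?thesis .
    qed
    have nn_eq: "real (n s) = (q^2 - kap * b0 s * q) / mu"
      using nmu mean_pos qq kapb0[of s] by (simp add: field_simps)
    have c_nn: "0 \<le> (q^2 - kap * b0 s * q) / mu" using nn_eq by simp
    have c_le: "(q^2 - kap * b0 s * q) / mu \<le> rs / mu"
      using gam_q kapb0[of s] qq mean_pos by (simp add: divide_right_mono)
    define nT where "nT = cmod (T s)"
    have Tdef: "T s = of_real(q^2 * sig2/mu) * (w - of_real(a0/q) * (of_real (b0 s) + R s))
        - of_real(kap * b0 s * q * sig2/mu) * w
        + of_real((q^2 - kap * b0 s * q)/mu) * (G (Z s) - of_real mu - of_real sig2 * w)"
      unfolding T_def q_def rs_def w_def Let_def by (rule refl)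
    have etaw: "w - of_real(a0/q) * (of_real (b0 s) + R s) = eta s" using weta by simp
    have Tb: "nT \<le> A1 * rs * cmod (eta s) + A2 * sqrt rs * cmod w + A3 * rs * cmod (G (Z s) - of_real mu - of_real sig2 * w)"
    proof -
      have t1: "cmod (of_real(q^2 * sig2/mu) * eta s) = A1 * rs * cmod (eta s)"
        using sig2_pos mean_pos qq rs_pos by (simp add: norm_mult norm_divide A1_def)
      have t2: "cmod (of_real(kap * b0 s * q * sig2/mu) * w) \<le> A2 * sqrt rs * cmod w"
      proof -
        have "cmod (of_real(kap * b0 s * q * sig2/mu) * w) = gamma s * q * sig2 / mu * cmod w"
        proof -
          have "gamma s > 0" using gb cg by linarith
          thus ?thesis using kapb0[of s] sig2_pos mean_pos q_pos by (simp add: norm_mult norm_divide abs_mult)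
        qed
        also have "\<dots> \<le> Cg * q * sig2 / mu * cmod w"
          using gb q_pos sig2_pos mean_pos
          by (intro mult_right_mono divide_right_mono mult_right_mono) auto
        finally show ?thesis by (simp add: A2_def q_def ac_simps)
      qed
      have t3: "cmod (of_real((q^2 - kap * b0 s * q)/mu) * (G (Z s) - of_real mu - of_real sig2 * w))
             \<le> A3 * rs * cmod (G (Z s) - of_real mu - of_real sig2 * w)"
      proof -
        have "cmod (of_real((q^2 - kap * b0 s * q)/mu) * (G (Z s) - of_real mu - of_real sig2 * w))
            = (q^2 - kap * b0 s * q)/mu * cmod (G (Z s) - of_real mu - of_real sig2 * w)"
          using c_nn by (simp only: norm_mult norm_of_real abs_of_nonneg)
        also have "\<dots> \<le> rs / mu * cmod (G (Z s) - of_real mu - of_real sig2 * w)"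
          using c_le by (rule mult_right_mono) simp
        finally show ?thesis by (simp add: A3_def)
      qed
      have "nT \<le> cmod (of_real(q^2 * sig2/mu) * eta s) + cmod (of_real(kap * b0 s * q * sig2/mu) * w)
           + cmod (of_real((q^2 - kap * b0 s * q)/mu) * (G (Z s) - of_real mu - of_real sig2 * w))"
        unfolding nT_def Tdef etaw
        by (rule order_trans[OF norm_triangle_ineq add_right_mono[OF norm_triangle_ineq4]])
      thus ?thesis using t1 t2 t3 by linarith
    qed
    have TK: "nT \<le> K1 * u"
      unfolding K1_def
      by (rule L2[OF rs_pos u1 A_nn Cr_nn less_imp_le[OF W1_pos] less_imp_le[OF C1] Tb ne nw norm_ge_zero rho])
    have us2: "u / rs \<le> kap^2 * m / (4 * K1^2 + 1)" using us by (simp add: eps_def)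
    note L3a = L3(1)[OF rs_pos u1 kap_pos m_pos K1_nn TK nR_lo us2 norm_ge_zero[of "T s", folded nT_def]]
    note L3b = L3(2)[OF rs_pos u1 kap_pos m_pos K1_nn TK nR_lo us2 norm_ge_zero[of "T s", folded nT_def]]
    define X where "X = of_real (kap * q) * R s + T s"
    have X_lo: "cmod X \<ge> kap * q * cmod (R s) / 2"
    proof -
      have "cmod (of_real (kap * q) * R s) \<le> cmod X + cmod (T s)"
        using norm_triangle_ineq4[of X "T s"] by (simp add: X_def)
      hence "kap * q * cmod (R s) \<le> cmod X + nT" using kap_pos q_pos by (simp add: norm_mult nT_def)
      thus ?thesis using L3a by (simp add: q_def)
    qed
    have kqR_pos: "kap * q * cmod (R s) > 0" using kap_pos q_pos R_nz by simp
    have X_nz: "X \<noteq> 0" using X_lo kqR_pos by auto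
    have Eb: "cmod (E s) \<le> K * (u / q)"
    proof -
      have "cmod (E s) = nT / cmod X" by (simp add: E_def X_def q_def rs_def nT_def norm_divide)
      also have "\<dots> \<le> nT / (kap * q * cmod (R s) / 2)"
      proof -
        have cX: "cmod X > 0" using X_nz by simp
        have hp: "0 < cmod X * (kap * q * cmod (R s) / 2)" using cX kqR_pos by simp
        show ?thesis by (rule divide_left_mono[OF X_lo _ hp]) (simp add: nT_def)
      qed
      also have "\<dots> = 2 * nT / (kap * sqrt rs * cmod (R s))" by (simp add: q_def)
      also have "\<dots> \<le> K * (u / q)" using L3b by (simp add: K_def q_def)
      finally show ?thesis .
    qed
    have Z_nz: "Z s \<noteq> 0" using Za by auto
    have Zrad: "ereal (cmod (Z s)) < pgf_radius P" using Za by auto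
    have dv: "deriv (\<lambda>z. pgf P z ^ n s) (Z s) = of_nat (n s) * (f1 (Z s) * pgf P (Z s) ^ (n s - Suc 0))"
      by (rule DERIV_imp_deriv[OF DERIV_power[OF f1d[OF Zrad]]])
    have den: "of_nat s * Z s ^ (s - 1) - deriv (\<lambda>z. pgf P z ^ n s) (Z s)
        = Z s ^ (s - 1) * (of_nat s - of_nat (n s) * G (Z s))"
    proof -
      have zs: "Z s ^ (s - 1) * Z s = Z s ^ s" using s1 by (intro power_minus_mult) simp
      have fs: "pgf P (Z s) ^ (n s - Suc 0) * pgf P (Z s) = pgf P (Z s) ^ n s"
        using power_minus_mult[of "n s" "pgf P (Z s)"] npos by simp
      have "Z s ^ (s - 1) * (of_nat (n s) * G (Z s)) = of_nat (n s) * f1 (Z s) * (Z s ^ (s - 1) * Z s) / pgf P (Z s)"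
        by (simp add: G_def)
      also have "\<dots> = of_nat (n s) * f1 (Z s) * (pgf P (Z s) ^ (n s - Suc 0) * pgf P (Z s)) / pgf P (Z s)"
        by (simp only: zs Zz fs)
      also have "\<dots> = of_nat (n s) * (f1 (Z s) * pgf P (Z s) ^ (n s - Suc 0))"
        using fz_nz by simp
      finally have "Z s ^ (s - 1) * (of_nat (n s) * G (Z s)) = deriv (\<lambda>z. pgf P z ^ n s) (Z s)"
        by (simp add: dv)
      thus ?thesis by (simp add: algebra_simps)
    qed
    have key: "of_nat (n s) * G (Z s) - of_nat s = X"
    proof -
      have "of_real ((q^2 - kap * b0 s * q)/mu) * G (Z s) - of_real (q^2) = of_real (kap * q) * R s + T s"
        unfolding Tdef by (rule key_alg_q[OF q_pos mean_pos kapa0])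
      moreover have "(of_nat (n s) :: complex) = of_real ((q^2 - kap * b0 s * q)/mu)"
      proof -
        have "(of_nat (n s) :: complex) = of_real (real (n s))" by simp
        thus ?thesis by (simp only: nn_eq)
      qed
      moreover have "(of_nat s :: complex) = of_real (q^2)" using qq by (simp add: rs_def)
      ultimately show ?thesis by (simp add: X_def)
    qed
    have num: "of_nat s - complex_of_real (real (n s) * mu) = of_real (kap * b0 s * q)"
    proof -
      have "real s - real (n s) * mu = kap * b0 s * q" using nmu kapb0[of s] by (simp add: rs_def)
      hence "complex_of_real (real s - real (n s) * mu) = of_real (kap * b0 s * q)" by simp
      thus ?thesis by simp
    qed
    have EX: "1 + E s = of_real (kap * q) * R s / X"
      using X_nz by (simp add: E_def X_def q_def rs_def field_simps)
    have eq: "- (of_nat s - complex_of_real (real (n s) * mu))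
                / (of_nat s * Z s ^ (s - 1) - deriv (\<lambda>z. pgf P z ^ n s) (Z s))
              = complex_of_real (b0 s) / R s * (1 / Z s ^ (s - 1)) * (1 + E s)"
    proof -
      have d2: "of_nat s - of_nat (n s) * G (Z s) = - X" unfolding key[symmetric] by simp
      show ?thesis unfolding den num EX d2
        using X_nz R_nz Z_nz kap_pos q_pos by (simp add: field_simps)
    qed
    show ?case using eq Eb by (simp add: u_def q_def rs_def)
  qed
  show ?thesis
  proof (intro exI[of _ E] conjI)
    show "(\<lambda>s. cmod (E s)) \<in> O(\<lambda>s. (1 + \<bar>real_of_int (k s)\<bar>) / sqrt (real s))"
    proof (rule bigoI[of _ K])
      show "\<forall>\<^sub>F s in sequentially. norm (cmod (E s)) \<le> K * norm ((1 + \<bar>real_of_int (k s)\<bar>) / sqrt (real s))"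
        using main by eventually_elim simp
    qed
    show "\<forall>\<^sub>F s in sequentially.
              - (of_nat s - complex_of_real (real (n s) * mu))
                / (of_nat s * Z s ^ (s - 1) - deriv (\<lambda>z. pgf P z ^ n s) (Z s))
              = complex_of_real (b0 s) / csqrt (complex_of_real ((b0 s)\<^sup>2)
                         - 2 * complex_of_real pi * \<i> * of_int (k s))
                * (1 / Z s ^ (s - 1)) * (1 + E s)"
      using main by eventually_elim (simp add: R_def)
  qed
qed

end
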